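(* Let $\mathbb F_q$ be a finite field with $q>2$ elements, $\mathbb F_q^*=\mathbb F_q\setminus\{0\}$, and let $\mathcal{SC}\subset\mathbb Z[\mathrm{SL}_2(\mathbb F_q)]$ be the $\mathbb Z$-span of the seven elements $$A=\left(\begin{array}{cc}\mathbb F_q^*&0\\0&\mathbb F_q^*\end{array}\right),\ B=\left(\begin{array}{cc}0&\mathbb F_q^*\\\mathbb F_q^*&0\end{array}\right),\ C=\left(\begin{array}{cc}\mathbb F_q^*&\mathbb F_q^*\\\mathbb F_q^*&\mathbb F_q^*\end{array}\right),$$ $$D_+=\left(\begin{array}{cc}\mathbb F_q^*&\mathbb F_q^*\\0&\mathbb F_q^*\end{array}\right),\ D_-=\left(\begin{array}{cc}\mathbb F_q^*&0\\\mathbb F_q^*&\mathbb F_q^*\end{array}\right),\ E_+=\left(\begin{array}{cc}\mathbb F_q^*&\mathbb F_q^*\\\mathbb F_q^*&0\end{array}\right),\ E_-=\left(\begin{array}{cc}0&\mathbb F_q^*\\\mathbb F_q^*&\mathbb F_q^*\end{array}\right),$$ which is a subring of $\mathbb Z[\mathrm{SL}_2(\mathbb F_q)]$. Then the $\mathbb Q$-algebra $\mathcal{SC}_{\mathbb Q}=\mathcal{SC}\otimes_{\mathbb Z}\mathbb Q$ is semi-simple and isomorphic to $\mathbb Q\oplus\mathbb Q\oplus\mathbb Q\oplus M_2(\mathbb Q)$, where $M_2(\mathbb Q)$ denotes the algebra of $2\times 2$ rational matrices.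
   Context: For subsets $\mathcal A,\mathcal B,\mathcal C,\mathcal D$ of $\mathbb F_q$, the symbol $\left(\begin{array}{cc}\mathcal A&\mathcal B\\\mathcal C&\mathcal D\end{array}\right)$ denotes the element $\sum \left(\begin{array}{cc}a&b\\c&d\end{array}\right)$ of $\mathbb Z[\mathrm{SL}_2(\mathbb F_q)]$, where the sum runs over all $(a,b,c,d)\in\mathcal A\times\mathcal B\times\mathcal C\times\mathcal D$ with $ad-bc=1$; an entry $0$ stands for the singleton $\{0\}$. So these are the sums of all matrices in $\mathrm{SL}_2(\mathbb F_q)$ with a given support. $\mathcal{SC}_{\mathbb Q}$ is a 7-dimensional $\mathbb Q$-algebra (with identity $\frac{1}{q-1}A$). *)

theory Defs
  imports "HOL-Analysis.Determinants"
begin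

text \<open>Elements of SL2(F) for a finite field F are matrices of type 'a^2^2 with det = 1.
  Elements of the group algebra Q[SL2(F)] are functions 'a^2^2 => rat vanishing off SL2(F).\<close>

definition SL2 :: "(('a::{field,finite})^2^2) set" where
  "SL2 = {M. det M = 1}"

definition supp_sum :: "'a set \<Rightarrow> 'a set \<Rightarrow> 'a set \<Rightarrow> 'a set \<Rightarrow> ('a::{field,finite})^2^2 \<Rightarrow> rat" where
  "supp_sum P Q R S = (\<lambda>M. if det M = 1 \<and> M$1$1 \<in> P \<and> M$1$2 \<in> Q \<and> M$2$1 \<in> R \<and> M$2$2 \<in> S
                             then 1 else 0)"

definition Fstar :: "('a::{field,finite}) set" where
  "Fstar = UNIV - {0}"

definition SC_A :: "('a::{field,finite})^2^2 \<Rightarrow> rat" where "SC_A = supp_sum Fstar {0} {0} Fstar"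
definition SC_B :: "('a::{field,finite})^2^2 \<Rightarrow> rat" where "SC_B = supp_sum {0} Fstar Fstar {0}"
definition SC_C :: "('a::{field,finite})^2^2 \<Rightarrow> rat" where "SC_C = supp_sum Fstar Fstar Fstar Fstar"
definition SC_Dp :: "('a::{field,finite})^2^2 \<Rightarrow> rat" where "SC_Dp = supp_sum Fstar Fstar {0} Fstar"
definition SC_Dm :: "('a::{field,finite})^2^2 \<Rightarrow> rat" where "SC_Dm = supp_sum Fstar {0} Fstar Fstar"
definition SC_Ep :: "('a::{field,finite})^2^2 \<Rightarrow> rat" where "SC_Ep = supp_sum Fstar Fstar Fstar {0}"
definition SC_Em :: "('a::{field,finite})^2^2 \<Rightarrow> rat" where "SC_Em = supp_sum {0} Fstar Fstar Fstar"

definition gconv :: "(('a::{field,finite})^2^2 \<Rightarrow> rat) \<Rightarrow> ('a^2^2 \<Rightarrow> rat) \<Rightarrow> 'a^2^2 \<Rightarrow> rat" where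
  "gconv f g = (\<lambda>M. \<Sum>X\<in>SL2. \<Sum>Y\<in>SL2. if X ** Y = M then f X * g Y else 0)"

text \<open>SC_Q: the Q-span of the seven elements inside Q[SL2(F)] (= SC tensor Q).\<close>
definition SC_Q :: "(('a::{field,finite})^2^2 \<Rightarrow> rat) set" where
  "SC_Q = {(\<lambda>M. c1 * SC_A M + c2 * SC_B M + c3 * SC_C M + c4 * SC_Dp M + c5 * SC_Dm M
                 + c6 * SC_Ep M + c7 * SC_Em M) | c1 c2 c3 c4 c5 c6 c7. True}"

type_synonym target = "rat \<times> rat \<times> rat \<times> ((rat^2)^2)"

definition tmult :: "target \<Rightarrow> target \<Rightarrow> target" where
  "tmult x y = (case x of (a1, a2, a3, m) \<Rightarrow> case y of (b1, b2, b3, n) \<Rightarrow>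
                  (a1 * b1, a2 * b2, a3 * b3, m ** n))"

definition tone :: target where
  "tone = (1, 1, 1, mat 1)"

definition tscale :: "rat \<Rightarrow> target \<Rightarrow> target" where
  "tscale c x = (case x of (a1, a2, a3, m) \<Rightarrow> (c * a1, c * a2, c * a3, (\<chi> i j. c * m$i$j)))"

end

theory Submission
  imports Defs
begin


definition mk :: "'a::field \<Rightarrow> 'a \<Rightarrow> 'a \<Rightarrow> 'a \<Rightarrow> 'a^2^2" where
  "mk a b c d = (\<chi> i j. if i = 1 then (if j = 1 then a else b) else (if j = 1 then c else d))"

lemma mk_nth[simp]: "mk a b c d $1$1 = a" "mk a b c d $1$2 = b" "mk a b c d $2$1 = c" "mk a b c d $2$2 = d"
  by (simp_all add: mk_def)

lemma mat_eq_iff: "(X::'a^2^2) = Y \<longleftrightarrow> X$1$1 = Y$1$1 \<and> X$1$2 = Y$1$2 \<and> X$2$1 = Y$2$1 \<and> X$2$2 = Y$2$2"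
  by (auto simp: vec_eq_iff forall_2)

lemma mk_eta: "mk (X$1$1) (X$1$2) (X$2$1) (X$2$2) = (X::'a::field^2^2)"
  by (simp add: mat_eq_iff)

lemma mult_nth[simp]: "((X::'a::field^2^2) ** Y)$i$j = X$i$1 * Y$1$j + X$i$2 * Y$2$j"
  by (simp add: matrix_matrix_mult_def sum_2)

lemma det_mk[simp]: "det (mk a b c d) = a * d - b * (c::'a::field)"
  by (simp add: det_2)

definition adj2 :: "'a::field^2^2 \<Rightarrow> 'a^2^2" where
  "adj2 X = mk (X$2$2) (-X$1$2) (-X$2$1) (X$1$1)"

lemma det2': "det (X::'a::field^2^2) = X$1$1 * X$2$2 - X$1$2 * X$2$1"
  by (simp add: det_2)

lemma adj2_left: "det X = 1 \<Longrightarrow> adj2 X ** (X::'a::field^2^2) = mat 1"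
  by (simp add: mat_eq_iff adj2_def det2' mat_def algebra_simps)

lemma adj2_right: "det X = 1 \<Longrightarrow> (X::'a::field^2^2) ** adj2 X = mat 1"
  by (simp add: mat_eq_iff adj2_def det2' mat_def algebra_simps)

lemma adj2_mult: "adj2 ((X::'a::field^2^2) ** Y) = adj2 Y ** adj2 X"
  by (simp add: mat_eq_iff adj2_def algebra_simps)

lemma det_adj2[simp]: "det (adj2 (X::'a::field^2^2)) = det X"
  by (simp add: adj2_def det2' algebra_simps)

lemma finite_SL2[simp]: "finite (SL2 :: (('a::{field,finite})^2^2) set)"
  by simp

lemma SL2_iff[simp]: "X \<in> SL2 \<longleftrightarrow> det X = 1"
  by (simp add: SL2_def)

lemma solve_eq: assumes "det X = 1" shows "(X ** Y = M) \<longleftrightarrow> Y = adj2 X ** (M::'a::field^2^2)"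
proof
  assume "X ** Y = M"
  then have "adj2 X ** (X ** Y) = adj2 X ** M" by simp
  then show "Y = adj2 X ** M" by (simp add: matrix_mul_assoc adj2_left[OF assms])
next
  assume "Y = adj2 X ** M"
  then show "X ** Y = M" by (simp add: matrix_mul_assoc adj2_right[OF assms] matrix_mul_lid)
qed

lemma gconv_alt: "gconv f g M = (if det M = 1 then \<Sum>X\<in>SL2. f X * g (adj2 X ** M) else 0)"
proof -
  have inner: "(\<Sum>Y\<in>SL2. if X ** Y = M then f X * g Y else 0) =
      (if det M = 1 then f X * g (adj2 X ** M) else 0)" if "X \<in> SL2" for X
  proof -
    have dX: "det X = 1" using that by simp
    have "(\<Sum>Y\<in>SL2. if X ** Y = M then f X * g Y else 0) = (\<Sum>Y\<in>SL2. if Y = adj2 X ** M then f X * g (adj2 X ** M) else 0)"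
      by (rule sum.cong) (auto simp: solve_eq[OF dX])
    also have "\<dots> = (if adj2 X ** M \<in> SL2 then f X * g (adj2 X ** M) else 0)"
      by (simp add: sum.delta')
    finally show ?thesis using dX by (simp add: det_mul)
  qed
  have "gconv f g M = (\<Sum>X\<in>SL2. if det M = 1 then f X * g (adj2 X ** M) else 0)"
    unfolding gconv_def by (intro sum.cong refl inner)
  then show ?thesis by simp
qed



lemma gconv_assoc: "gconv f (gconv g h) = gconv (gconv f g) (h :: ('a::{field,finite})^2^2 \<Rightarrow> rat)"
proof (rule ext)
  fix M :: "'a^2^2"
  show "gconv f (gconv g h) M = gconv (gconv f g) h M"
  proof (cases "det M = 1")
    case False then show ?thesis by (simp add: gconv_alt)
  next
    case dM: True
    have L: "gconv f (gconv g h) M = (\<Sum>X\<in>SL2. f X * (\<Sum>Y\<in>SL2. g Y * h (adj2 Y ** (adj2 X ** M))))"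
    proof -
      have "gconv f (gconv g h) M = (\<Sum>X\<in>SL2. f X * gconv g h (adj2 X ** M))"
        using dM gconv_alt[of f "gconv g h" M] by simp
      also have "\<dots> = (\<Sum>X\<in>SL2. f X * (\<Sum>Y\<in>SL2. g Y * h (adj2 Y ** (adj2 X ** M))))"
        by (rule sum.cong[OF refl]) (simp add: gconv_alt[of g h] det_mul dM)
      finally show ?thesis .
    qed
    have "gconv (gconv f g) h M = (\<Sum>Z\<in>SL2. (\<Sum>X\<in>SL2. f X * g (adj2 X ** Z)) * h (adj2 Z ** M))"
      using dM gconv_alt[of "gconv f g" h M] 
      by (simp add: gconv_alt[of f g])
    also have "\<dots> = (\<Sum>Z\<in>SL2. \<Sum>X\<in>SL2. f X * (g (adj2 X ** Z) * h (adj2 Z ** M)))"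
      by (simp only: sum_distrib_right mult.assoc)
    also have "\<dots> = (\<Sum>X\<in>SL2. \<Sum>Z\<in>SL2. f X * (g (adj2 X ** Z) * h (adj2 Z ** M)))"
      by (rule sum.swap)
    also have "\<dots> = (\<Sum>X\<in>SL2. f X * (\<Sum>Z\<in>SL2. g (adj2 X ** Z) * h (adj2 Z ** M)))"
      by (simp only: sum_distrib_left)
    also have "\<dots> = (\<Sum>X\<in>SL2. f X * (\<Sum>Y\<in>SL2. g Y * h (adj2 Y ** (adj2 X ** M))))"
    proof (rule sum.cong[OF refl])
      fix X :: "'a^2^2" assume "X \<in> SL2"
      then have dX: "det X = 1" by simp
      have bij: "bij_betw (\<lambda>Y. X ** Y) SL2 SL2"
      proof (rule bij_betwI[where g = "\<lambda>Z. adj2 X ** Z"])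
        show "(\<lambda>Y. X ** Y) \<in> SL2 \<rightarrow> SL2" using dX by (auto simp: det_mul)
        show "(\<lambda>Z. adj2 X ** Z) \<in> SL2 \<rightarrow> SL2" using dX by (auto simp: det_mul)
        show "adj2 X ** (X ** Y) = Y" for Y by (simp add: matrix_mul_assoc adj2_left[OF dX] matrix_mul_lid)
        show "X ** (adj2 X ** Z) = Z" for Z by (simp add: matrix_mul_assoc adj2_right[OF dX] matrix_mul_lid)
      qed
      have "(\<Sum>Z\<in>SL2. g (adj2 X ** Z) * h (adj2 Z ** M)) = (\<Sum>Y\<in>SL2. g (adj2 X ** (X ** Y)) * h (adj2 (X ** Y) ** M))"
        using sum.reindex_bij_betw[OF bij, of "\<lambda>Z. g (adj2 X ** Z) * h (adj2 Z ** M)"] by simp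
      also have "\<dots> = (\<Sum>Y\<in>SL2. g Y * h (adj2 Y ** (adj2 X ** M)))"
        by (simp add: matrix_mul_assoc adj2_left[OF dX] matrix_mul_lid adj2_mult)
      finally show "f X * (\<Sum>Z\<in>SL2. g (adj2 X ** Z) * h (adj2 Z ** M)) = f X * (\<Sum>Y\<in>SL2. g Y * h (adj2 Y ** (adj2 X ** M)))"
        by simp
    qed
    finally show ?thesis using L by simp
  qed
qed



lemma gconv_lin_l: "gconv (\<lambda>M. c * f M + g M) h = (\<lambda>M. c * gconv f h M + gconv g h M)"
  by (rule ext) (simp add: gconv_alt sum.distrib sum_distrib_left algebra_simps)

lemma gconv_lin_r: "gconv f (\<lambda>M. c * g M + h M) = (\<lambda>M. c * gconv f g M + gconv f h M)"
  by (rule ext) (simp add: gconv_alt sum.distrib sum_distrib_left algebra_simps)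

lemma gconv_scale_l: "gconv (\<lambda>M. c * f M) h = (\<lambda>M. c * gconv f h M)"
  by (rule ext) (simp add: gconv_alt sum_distrib_left algebra_simps)

lemma gconv_scale_r: "gconv f (\<lambda>M. c * h M) = (\<lambda>M. c * gconv f h M)"
  by (rule ext) (simp add: gconv_alt sum_distrib_left algebra_simps)

lemma sum_param:
  assumes "finite S" "inj_on g S" "{X\<in>(SL2::(('a::{field,finite})^2^2) set). P X} = g ` S"
  shows "(\<Sum>X\<in>SL2. (if P X then h X else 0)) = (\<Sum>s\<in>S. h (g s))"
proof -
  have "(\<Sum>X\<in>SL2. (if P X then h X else 0)) = (\<Sum>X\<in>{X\<in>(SL2::(('a::{field,finite})^2^2) set). P X}. h X)"
    by (rule sum.inter_filter[symmetric]) simp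
  also have "\<dots> = (\<Sum>s\<in>S. h (g s))" unfolding assms(3) using sum.reindex[OF assms(2)] by simp
  finally show ?thesis .
qed

lemma Fstar_iff[simp]: "x \<in> Fstar \<longleftrightarrow> x \<noteq> 0"
  by (simp add: Fstar_def)

lemma SC_A_eq: "SC_A X = (if det X = 1 \<and> X$1$1 \<noteq> 0 \<and> X$1$2 = 0 \<and> X$2$1 = 0 \<and> X$2$2 \<noteq> 0 then 1 else 0)"
  by (simp add: SC_A_def supp_sum_def)
lemma SC_B_eq: "SC_B X = (if det X = 1 \<and> X$1$1 = 0 \<and> X$1$2 \<noteq> 0 \<and> X$2$1 \<noteq> 0 \<and> X$2$2 = 0 then 1 else 0)"
  by (simp add: SC_B_def supp_sum_def)
lemma SC_Dp_eq: "SC_Dp X = (if det X = 1 \<and> X$1$1 \<noteq> 0 \<and> X$1$2 \<noteq> 0 \<and> X$2$1 = 0 \<and> X$2$2 \<noteq> 0 then 1 else 0)"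
  by (simp add: SC_Dp_def supp_sum_def)

lemma sumA: "(\<Sum>X\<in>SL2. SC_A X * h X) = (\<Sum>t\<in>Fstar. h (mk t 0 0 (inverse t) :: ('a::{field,finite})^2^2))"
proof -
  have "(\<Sum>X\<in>SL2. SC_A X * h X) = (\<Sum>X\<in>SL2. if det X = 1 \<and> X$1$1 \<noteq> 0 \<and> X$1$2 = 0 \<and> X$2$1 = 0 \<and> X$2$2 \<noteq> 0 then h X else 0)"
    by (rule sum.cong[OF refl]) (simp add: SC_A_eq)
  also have "\<dots> = (\<Sum>t\<in>Fstar. h (mk t 0 0 (inverse t)))"
  proof (rule sum_param)
    show "finite (Fstar :: 'a set)" by simp
    show "inj_on (\<lambda>t. mk t 0 0 (inverse t) :: 'a^2^2) Fstar" 
      by (rule inj_onI) (simp add: mat_eq_iff)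
    show "{X\<in>SL2. det X = 1 \<and> X$1$1 \<noteq> 0 \<and> X$1$2 = 0 \<and> X$2$1 = 0 \<and> X$2$2 \<noteq> 0} = (\<lambda>t. mk t 0 0 (inverse t)) ` (Fstar :: 'a set)"
    proof (rule set_eqI, rule iffI)
      fix X :: "'a^2^2" assume "X \<in> {X\<in>SL2. det X = 1 \<and> X$1$1 \<noteq> 0 \<and> X$1$2 = 0 \<and> X$2$1 = 0 \<and> X$2$2 \<noteq> 0}"
      then have h: "X$1$1 * X$2$2 = 1" "X$1$1 \<noteq> 0" "X$1$2 = 0" "X$2$1 = 0" by (auto simp: det2')
      then have "X = mk (X$1$1) 0 0 (inverse (X$1$1))" by (simp add: mat_eq_iff field_simps)
      then show "X \<in> (\<lambda>t. mk t 0 0 (inverse t)) ` Fstar" using h by auto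
    qed auto
  qed
  finally show ?thesis .
qed

lemma sumB: "(\<Sum>X\<in>SL2. SC_B X * h X) = (\<Sum>t\<in>Fstar. h (mk 0 t (- inverse t) 0 :: ('a::{field,finite})^2^2))"
proof -
  have "(\<Sum>X\<in>SL2. SC_B X * h X) = (\<Sum>X\<in>SL2. if det X = 1 \<and> X$1$1 = 0 \<and> X$1$2 \<noteq> 0 \<and> X$2$1 \<noteq> 0 \<and> X$2$2 = 0 then h X else 0)"
    by (rule sum.cong[OF refl]) (simp add: SC_B_eq)
  also have "\<dots> = (\<Sum>t\<in>Fstar. h (mk 0 t (- inverse t) 0))"
  proof (rule sum_param)
    show "finite (Fstar :: 'a set)" by simp
    show "inj_on (\<lambda>t. mk 0 t (- inverse t) 0 :: 'a^2^2) Fstar" 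
      by (rule inj_onI) (simp add: mat_eq_iff)
    show "{X\<in>SL2. det X = 1 \<and> X$1$1 = 0 \<and> X$1$2 \<noteq> 0 \<and> X$2$1 \<noteq> 0 \<and> X$2$2 = 0} = (\<lambda>t. mk 0 t (- inverse t) 0) ` (Fstar :: 'a set)"
    proof (rule set_eqI, rule iffI)
      fix X :: "'a^2^2" assume "X \<in> {X\<in>SL2. det X = 1 \<and> X$1$1 = 0 \<and> X$1$2 \<noteq> 0 \<and> X$2$1 \<noteq> 0 \<and> X$2$2 = 0}"
      then have h: "X$1$2 * X$2$1 = -1" "X$1$2 \<noteq> 0" "X$1$1 = 0" "X$2$2 = 0" by (auto simp: det2' minus_equation_iff)
      then have "X = mk 0 (X$1$2) (- inverse (X$1$2)) 0" by (simp add: mat_eq_iff field_simps)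
      then show "X \<in> (\<lambda>t. mk 0 t (- inverse t) 0) ` Fstar" using h by auto
    qed auto
  qed
  finally show ?thesis .
qed

lemma sumD: "(\<Sum>X\<in>SL2. SC_Dp X * h X) = (\<Sum>t\<in>Fstar. \<Sum>s\<in>Fstar. h (mk t s 0 (inverse t) :: ('a::{field,finite})^2^2))"
proof -
  have "(\<Sum>X\<in>SL2. SC_Dp X * h X) = (\<Sum>X\<in>SL2. if det X = 1 \<and> X$1$1 \<noteq> 0 \<and> X$1$2 \<noteq> 0 \<and> X$2$1 = 0 \<and> X$2$2 \<noteq> 0 then h X else 0)"
    by (rule sum.cong[OF refl]) (simp add: SC_Dp_eq)
  also have "\<dots> = (\<Sum>p\<in>Fstar \<times> Fstar. h ((\<lambda>(t,s). mk t s 0 (inverse t)) p))"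
  proof (rule sum_param)
    show "finite (Fstar \<times> Fstar :: ('a \<times> 'a) set)" by simp
    show "inj_on (\<lambda>(t,s). mk t s 0 (inverse t) :: 'a^2^2) (Fstar \<times> Fstar)" 
      by (rule inj_onI) (auto simp: mat_eq_iff)
    show "{X\<in>SL2. det X = 1 \<and> X$1$1 \<noteq> 0 \<and> X$1$2 \<noteq> 0 \<and> X$2$1 = 0 \<and> X$2$2 \<noteq> 0} = (\<lambda>(t,s). mk t s 0 (inverse t)) ` (Fstar \<times> Fstar :: ('a \<times> 'a) set)"
    proof (rule set_eqI, rule iffI)
      fix X :: "'a^2^2" assume "X \<in> {X\<in>SL2. det X = 1 \<and> X$1$1 \<noteq> 0 \<and> X$1$2 \<noteq> 0 \<and> X$2$1 = 0 \<and> X$2$2 \<noteq> 0}"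
      then have h: "X$1$1 * X$2$2 = 1" "X$1$1 \<noteq> 0" "X$1$2 \<noteq> 0" "X$2$1 = 0" by (auto simp: det2')
      then have eq: "X = (\<lambda>(t,s). mk t s 0 (inverse t)) (X$1$1, X$1$2)" by (simp add: mat_eq_iff field_simps)
      show "X \<in> (\<lambda>(t,s). mk t s 0 (inverse t)) ` (Fstar \<times> Fstar)" by (rule rev_image_eqI[where x="(X$1$1, X$1$2)" and f="\<lambda>(t,s). mk t s 0 (inverse t)", OF _ eq]) (simp add: h)
    qed auto
  qed
  also have "\<dots> = (\<Sum>t\<in>Fstar. \<Sum>s\<in>Fstar. h (mk t s 0 (inverse t)))"
    by (simp add: sum.cartesian_product split_def)
  finally show ?thesis .
qed



definition zs :: "'a::{field,finite} set \<Rightarrow> bool" where "zs P \<longleftrightarrow> P = Fstar \<or> P = {0}"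

lemma zs_mem_scale: "c \<noteq> 0 \<Longrightarrow> zs P \<Longrightarrow> (c * x \<in> P) \<longleftrightarrow> (x \<in> P)"
  by (auto simp: zs_def)

lemma zs_mem_neg: "zs P \<Longrightarrow> (- x \<in> P) \<longleftrightarrow> (x \<in> P)"
  by (auto simp: zs_def)

lemma card_Fstar: "card (Fstar :: 'a::{field,finite} set) = CARD('a) - 1"
  by (simp add: Fstar_def card_Diff_singleton)

lemma sum_Fstar_const: "(\<Sum>t\<in>(Fstar :: 'a::{field,finite} set). c) = (of_nat CARD('a) - 1 :: rat) * c"
proof -
  have "CARD('a) \<ge> 1" by (simp add: Suc_leI)
  then show ?thesis by (simp add: card_Fstar of_nat_diff)
qed

lemma supp_sum_scale:
  assumes "t \<noteq> 0" "u \<noteq> 0" "zs P" "zs Q" "zs R" "zs S" "t * u * (a * d - b * c) = a * d - b * c"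
  shows "supp_sum P Q R S (mk (t * a) (t * b) (u * c) (u * d)) = supp_sum P Q R S (mk a b c (d::'a::{field,finite}))"
proof -
  have "det (mk (t * a) (t * b) (u * c) (u * d)) = det (mk a b c d)"
    using assms(7) by (simp add: algebra_simps)
  then show ?thesis using assms(1-6) by (simp add: supp_sum_def zs_mem_scale)
qed

lemma LA_gen:
  assumes "zs P" "zs Q" "zs R" "zs S"
  shows "gconv SC_A (supp_sum P Q R S) = (\<lambda>M. (of_nat CARD('a) - 1) * supp_sum P Q R S (M::('a::{field,finite})^2^2))"
proof (rule ext)
  fix M :: "'a^2^2"
  show "gconv SC_A (supp_sum P Q R S) M = (of_nat CARD('a) - 1) * supp_sum P Q R S M"
  proof (cases "det M = 1")
    case False then show ?thesis by (simp add: gconv_alt supp_sum_def)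
  next
    case True
    have "gconv SC_A (supp_sum P Q R S) M = (\<Sum>t\<in>Fstar. supp_sum P Q R S (adj2 (mk t 0 0 (inverse t)) ** M))"
      using True by (simp add: gconv_alt sumA)
    also have "\<dots> = (\<Sum>t\<in>(Fstar::'a set). supp_sum P Q R S M)"
    proof (rule sum.cong[OF refl])
      fix t :: 'a assume "t \<in> Fstar"
      then have t: "t \<noteq> 0" by simp
      have e: "adj2 (mk t 0 0 (inverse t)) ** M = mk (inverse t * M$1$1) (inverse t * M$1$2) (t * M$2$1) (t * M$2$2)"
        by (simp add: mat_eq_iff adj2_def)
      show "supp_sum P Q R S (adj2 (mk t 0 0 (inverse t)) ** M) = supp_sum P Q R S M"
        unfolding e using t assms supp_sum_scale[of "inverse t" t P Q R S "M$1$1" "M$2$2" "M$1$2" "M$2$1"]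
        by (simp add: mk_eta)
    qed
    also have "\<dots> = (of_nat CARD('a) - 1) * supp_sum P Q R S M" by (rule sum_Fstar_const)
    finally show ?thesis .
  qed
qed

lemma LB_gen:
  assumes "zs P" "zs Q" "zs R" "zs S"
  shows "gconv SC_B (supp_sum P Q R S) = (\<lambda>M. (of_nat CARD('a) - 1) * supp_sum R S P Q (M::('a::{field,finite})^2^2))"
proof (rule ext)
  fix M :: "'a^2^2"
  show "gconv SC_B (supp_sum P Q R S) M = (of_nat CARD('a) - 1) * supp_sum R S P Q M"
  proof (cases "det M = 1")
    case False then show ?thesis by (simp add: gconv_alt supp_sum_def)
  next
    case True
    have "gconv SC_B (supp_sum P Q R S) M = (\<Sum>t\<in>Fstar. supp_sum P Q R S (adj2 (mk 0 t (- inverse t) 0) ** M))"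
      using True by (simp add: gconv_alt sumB)
    also have "\<dots> = (\<Sum>t\<in>(Fstar::'a set). supp_sum R S P Q M)"
    proof (rule sum.cong[OF refl])
      fix t :: 'a assume "t \<in> Fstar"
      then have t: "t \<noteq> 0" by simp
      have e: "adj2 (mk 0 t (- inverse t) 0) ** M = mk ((-t) * M$2$1) ((-t) * M$2$2) (inverse t * M$1$1) (inverse t * M$1$2)"
        by (simp add: mat_eq_iff adj2_def)
      have d: "det (mk ((-t) * M$2$1) ((-t) * M$2$2) (inverse t * M$1$1) (inverse t * M$1$2)) = det M"
        using t by (simp add: det2' field_simps)
      have "supp_sum P Q R S (mk ((-t) * M$2$1) ((-t) * M$2$2) (inverse t * M$1$1) (inverse t * M$1$2))
          = supp_sum R S P Q M"
        unfolding supp_sum_def d using t assms by (simp add: zs_mem_scale zs_mem_neg conj_ac)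
      then show "supp_sum P Q R S (adj2 (mk 0 t (- inverse t) 0) ** M) = supp_sum R S P Q M"
        unfolding e .
    qed
    also have "\<dots> = (of_nat CARD('a) - 1) * supp_sum R S P Q M" by (rule sum_Fstar_const)
    finally show ?thesis .
  qed
qed

lemma sum_Fstar_mult:
  assumes "t \<noteq> (0::'a::{field,finite})"
  shows "(\<Sum>s\<in>Fstar. g (t * s)) = (\<Sum>r\<in>Fstar. (g r :: rat))"
proof -
  have inj: "inj_on ((*) t) Fstar" using assms by (auto intro: inj_onI)
  have img: "(*) t ` Fstar = Fstar"
  proof (rule set_eqI, rule iffI)
    fix r :: 'a assume "r \<in> Fstar" then show "r \<in> (*) t ` Fstar"
      using assms by (intro rev_image_eqI[where x="r / t"]) auto
  qed (use assms in auto)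
  show ?thesis using sum.reindex[OF inj, of g] img by simp
qed

lemma LD_gen:
  fixes M :: "('a::{field,finite})^2^2"
  assumes "zs P" "zs Q" "zs R" "zs S"
  shows "gconv SC_Dp (supp_sum P Q R S) M = (if det M = 1 then (of_nat CARD('a) - 1) *
     (\<Sum>r\<in>Fstar. supp_sum P Q R S (mk (M$1$1 - r * M$2$1) (M$1$2 - r * M$2$2) (M$2$1) (M$2$2))) else 0)"
proof (cases "det M = 1")
  case False then show ?thesis by (simp add: gconv_alt)
next
  case True
  let ?g = "\<lambda>r. supp_sum P Q R S (mk (M$1$1 - r * M$2$1) (M$1$2 - r * M$2$2) (M$2$1) (M$2$2))"
  have "gconv SC_Dp (supp_sum P Q R S) M = (\<Sum>t\<in>Fstar. \<Sum>s\<in>Fstar. supp_sum P Q R S (adj2 (mk t s 0 (inverse t)) ** M))"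
    using True by (simp add: gconv_alt sumD)
  also have "\<dots> = (\<Sum>t\<in>(Fstar::'a set). \<Sum>s\<in>Fstar. ?g (t * s))"
  proof (intro sum.cong refl)
    fix t s :: 'a assume "t \<in> Fstar"
    then have t: "t \<noteq> 0" by simp
    have e: "adj2 (mk t s 0 (inverse t)) ** M = mk (inverse t * (M$1$1 - (t * s) * M$2$1)) (inverse t * (M$1$2 - (t * s) * M$2$2)) (t * M$2$1) (t * M$2$2)"
      using t by (simp add: mat_eq_iff adj2_def field_simps)
    show "supp_sum P Q R S (adj2 (mk t s 0 (inverse t)) ** M) = ?g (t * s)"
      unfolding e using t assms by (intro supp_sum_scale) auto
  qed
  also have "\<dots> = (\<Sum>t\<in>(Fstar::'a set). \<Sum>r\<in>Fstar. ?g r)"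
    by (intro sum.cong refl sum_Fstar_mult) simp
  also have "\<dots> = (of_nat CARD('a) - 1) * (\<Sum>r\<in>Fstar. ?g r)" by (rule sum_Fstar_const)
  finally show ?thesis using True by simp
qed



lemma sum_if_const: "(\<Sum>r\<in>A. if B then f r else 0) = (if B then (\<Sum>r\<in>A. f r) else 0)"
  by (cases B) auto

lemma K0:
  assumes "a * d - b * c = (1::'a::{field,finite})"
  shows "(\<Sum>r\<in>Fstar. if a - r * c = 0 then 1 else (0::rat)) = (if c \<noteq> 0 \<and> a \<noteq> 0 then 1 else 0)"
proof (cases "c = 0")
  case True
  then have "a \<noteq> 0" using assms by auto
  then show ?thesis using True by simp
next
  case False
  have "(\<Sum>r\<in>Fstar. if a - r * c = 0 then 1 else (0::rat)) = (\<Sum>r\<in>Fstar. if r = a / c then 1 else (0::rat))"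
    using False by (intro sum.cong refl) (auto simp: field_simps)
  also have "\<dots> = (if a / c \<in> Fstar then 1 else 0)" by (simp add: sum.delta')
  finally show ?thesis using False by simp
qed

lemma K1:
  assumes "a * d - b * c = (1::'a::{field,finite})"
  shows "(\<Sum>r\<in>Fstar. if b - r * d = 0 then 1 else (0::rat)) = (if d \<noteq> 0 \<and> b \<noteq> 0 then 1 else 0)"
proof (cases "d = 0")
  case True
  then have "b \<noteq> 0" using assms by auto
  then show ?thesis using True by simp
next
  case False
  have "(\<Sum>r\<in>Fstar. if b - r * d = 0 then 1 else (0::rat)) = (\<Sum>r\<in>Fstar. if r = b / d then 1 else (0::rat))"
    using False by (intro sum.cong refl) (auto simp: field_simps)
  also have "\<dots> = (if b / d \<in> Fstar then 1 else 0)" by (simp add: sum.delta')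
  finally show ?thesis using False by simp
qed

lemma both_not:
  assumes "a * d - b * c = (1::'a::field)" "a - r * c = 0" "b - r * d = 0"
  shows False
proof -
  have "a = r * c" "b = r * d" using assms(2,3) by (simp_all add: algebra_simps)
  then show False using assms(1) by (simp add: algebra_simps)
qed

definition cstar where "cstar a c = (if c \<noteq> 0 \<and> a \<noteq> (0::'a::field) then 1 else (0::rat))"

lemma S00:
  assumes "a * d - b * c = (1::'a::{field,finite})"
  shows "(\<Sum>r\<in>Fstar. supp_sum {0} {0} R S (mk (a - r * c) (b - r * d) c d)) = 0"
  using both_not[OF assms] by (intro sum.neutral) (auto simp: supp_sum_def)

lemma S01:
  assumes "a * d - b * c = (1::'a::{field,finite})"
  shows "(\<Sum>r\<in>Fstar. supp_sum {0} Fstar R S (mk (a - r * c) (b - r * d) c d)) = (if c \<in> R \<and> d \<in> S then cstar a c else 0)"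
proof -
  have "(\<Sum>r\<in>Fstar. supp_sum {0} Fstar R S (mk (a - r * c) (b - r * d) c d)) =
        (\<Sum>r\<in>Fstar. if c \<in> R \<and> d \<in> S then (if a - r * c = 0 then 1 else 0) else 0)"
  proof (intro sum.cong refl)
    fix r
    have "det (mk (a - r * c) (b - r * d) c d) = 1" using assms by (simp add: algebra_simps)
    then show "supp_sum {0} Fstar R S (mk (a - r * c) (b - r * d) c d) = (if c \<in> R \<and> d \<in> S then (if a - r * c = 0 then 1 else 0) else 0)"
      using both_not[OF assms, of r] by (auto simp: supp_sum_def)
  qed
  also have "\<dots> = (if c \<in> R \<and> d \<in> S then cstar a c else 0)"
    using K0[OF assms] by (simp only: sum_if_const) (simp add: cstar_def)
  finally show ?thesis .
qed

lemma S10: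
  assumes "a * d - b * c = (1::'a::{field,finite})"
  shows "(\<Sum>r\<in>Fstar. supp_sum Fstar {0} R S (mk (a - r * c) (b - r * d) c d)) = (if c \<in> R \<and> d \<in> S then cstar b d else 0)"
proof -
  have "(\<Sum>r\<in>Fstar. supp_sum Fstar {0} R S (mk (a - r * c) (b - r * d) c d)) =
        (\<Sum>r\<in>Fstar. if c \<in> R \<and> d \<in> S then (if b - r * d = 0 then 1 else 0) else 0)"
  proof (intro sum.cong refl)
    fix r
    have "det (mk (a - r * c) (b - r * d) c d) = 1" using assms by (simp add: algebra_simps)
    then show "supp_sum Fstar {0} R S (mk (a - r * c) (b - r * d) c d) = (if c \<in> R \<and> d \<in> S then (if b - r * d = 0 then 1 else 0) else 0)"
      using both_not[OF assms, of r] by (auto simp: supp_sum_def)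
  qed
  also have "\<dots> = (if c \<in> R \<and> d \<in> S then cstar b d else 0)"
    using K1[OF assms] by (simp only: sum_if_const) (simp add: cstar_def)
  finally show ?thesis .
qed

lemma S11:
  assumes "a * d - b * c = (1::'a::{field,finite})"
  shows "(\<Sum>r\<in>Fstar. supp_sum Fstar Fstar R S (mk (a - r * c) (b - r * d) c d)) =
     (if c \<in> R \<and> d \<in> S then (of_nat CARD('a) - 1) - cstar a c - cstar b d else 0)"
proof -
  have "(\<Sum>r\<in>Fstar. supp_sum Fstar Fstar R S (mk (a - r * c) (b - r * d) c d)) =
        (\<Sum>r\<in>Fstar. if c \<in> R \<and> d \<in> S then 1 - (if a - r * c = 0 then 1 else 0) - (if b - r * d = 0 then 1 else 0) else (0::rat))"
  proof (intro sum.cong refl)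
    fix r
    have "det (mk (a - r * c) (b - r * d) c d) = 1" using assms by (simp add: algebra_simps)
    then show "supp_sum Fstar Fstar R S (mk (a - r * c) (b - r * d) c d) = (if c \<in> R \<and> d \<in> S then 1 - (if a - r * c = 0 then 1 else 0) - (if b - r * d = 0 then 1 else 0) else (0::rat))"
      using both_not[OF assms, of r] by (auto simp: supp_sum_def)
  qed
  also have "\<dots> = (if c \<in> R \<and> d \<in> S then (\<Sum>r\<in>Fstar. 1 - (if a - r * c = 0 then 1 else 0) - (if b - r * d = 0 then 1 else 0)) else (0::rat))"
    by (simp only: sum_if_const)
  also have "\<dots> = (if c \<in> R \<and> d \<in> S then (of_nat CARD('a) - 1) - cstar a c - cstar b d else 0)"
    using K0[OF assms] K1[OF assms] sum_Fstar_const[where 'a='a, of 1]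
    by (simp add: sum_subtractf cstar_def)
  finally show ?thesis .
qed



definition V :: "rat \<Rightarrow> rat \<Rightarrow> rat \<Rightarrow> rat \<Rightarrow> rat \<Rightarrow> rat \<Rightarrow> rat \<Rightarrow> ('a::{field,finite})^2^2 \<Rightarrow> rat" where
  "V c1 c2 c3 c4 c5 c6 c7 = (\<lambda>M. c1 * SC_A M + c2 * SC_B M + c3 * SC_C M + c4 * SC_Dp M + c5 * SC_Dm M
                 + c6 * SC_Ep M + c7 * SC_Em M)"

lemma SC_Q_V: "SC_Q = {V c1 c2 c3 c4 c5 c6 c7 | c1 c2 c3 c4 c5 c6 c7. True}"
  unfolding SC_Q_def V_def by simp

lemma gconv_V_r: "gconv f (V c1 c2 c3 c4 c5 c6 c7) = (\<lambda>M. c1 * gconv f SC_A M + c2 * gconv f SC_B M + c3 * gconv f SC_C M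
   + c4 * gconv f SC_Dp M + c5 * gconv f SC_Dm M + c6 * gconv f SC_Ep M + c7 * gconv f SC_Em M)"
  by (rule ext) (simp add: gconv_alt V_def sum.distrib sum_distrib_left algebra_simps)

lemma gconv_V_l: "gconv (V c1 c2 c3 c4 c5 c6 c7) f = (\<lambda>M. c1 * gconv SC_A f M + c2 * gconv SC_B f M + c3 * gconv SC_C f M
   + c4 * gconv SC_Dp f M + c5 * gconv SC_Dm f M + c6 * gconv SC_Ep f M + c7 * gconv SC_Em f M)"
  by (rule ext) (simp add: gconv_alt V_def sum.distrib sum_distrib_left sum_distrib_right algebra_simps)

lemma zs_F[simp]: "zs Fstar" and zs_0[simp]: "zs {0}" by (simp_all add: zs_def)

lemma zs_mems_A: "zs (Fstar :: ('a::{field,finite}) set)" "zs ({0} :: 'a set)" "zs ({0} :: 'a set)" "zs (Fstar :: 'a set)" by simp_all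
lemma zs_mems_B: "zs ({0} :: ('a::{field,finite}) set)" "zs (Fstar :: 'a set)" "zs (Fstar :: 'a set)" "zs ({0} :: 'a set)" by simp_all
lemma zs_mems_C: "zs (Fstar :: ('a::{field,finite}) set)" "zs (Fstar :: 'a set)" "zs (Fstar :: 'a set)" "zs (Fstar :: 'a set)" by simp_all
lemma zs_mems_Dp: "zs (Fstar :: ('a::{field,finite}) set)" "zs (Fstar :: 'a set)" "zs ({0} :: 'a set)" "zs (Fstar :: 'a set)" by simp_all
lemma zs_mems_Dm: "zs (Fstar :: ('a::{field,finite}) set)" "zs ({0} :: 'a set)" "zs (Fstar :: 'a set)" "zs (Fstar :: 'a set)" by simp_all
lemma zs_mems_Ep: "zs (Fstar :: ('a::{field,finite}) set)" "zs (Fstar :: 'a set)" "zs (Fstar :: 'a set)" "zs ({0} :: 'a set)" by simp_all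
lemma zs_mems_Em: "zs ({0} :: ('a::{field,finite}) set)" "zs (Fstar :: 'a set)" "zs (Fstar :: 'a set)" "zs (Fstar :: 'a set)" by simp_all

lemma LA_A: "gconv SC_A (SC_A :: ('a::{field,finite})^2^2 \<Rightarrow> rat) = (\<lambda>M. (of_nat CARD('a) - 1) * SC_A M)"
  using LA_gen[OF zs_mems_A] unfolding SC_A_def[symmetric] .

lemma LB_A: "gconv SC_B (SC_A :: ('a::{field,finite})^2^2 \<Rightarrow> rat) = (\<lambda>M. (of_nat CARD('a) - 1) * SC_B M)"
  using LB_gen[OF zs_mems_A] unfolding SC_A_def[symmetric] SC_B_def[symmetric] .

lemma LD_A: "gconv SC_Dp (SC_A :: ('a::{field,finite})^2^2 \<Rightarrow> rat) = V (0) (0) (0) ((of_nat CARD('a) - 1)) (0) (0) (0)"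
proof (rule ext)
  fix M :: "'a^2^2"
  show "gconv SC_Dp SC_A M = V (0) (0) (0) ((of_nat CARD('a) - 1)) (0) (0) (0) M"
  proof (cases "det M = 1")
    case False then show ?thesis by (simp add: gconv_alt V_def SC_A_def SC_B_def SC_C_def SC_Dp_def SC_Dm_def SC_Ep_def SC_Em_def supp_sum_def)
  next
    case True
    then have d: "M$1$1 * M$2$2 - M$1$2 * M$2$1 = 1" by (simp add: det2')
    have e: "gconv SC_Dp SC_A M = (of_nat CARD('a) - 1) * (\<Sum>r\<in>Fstar. supp_sum Fstar {0} {0} Fstar (mk (M$1$1 - r * M$2$1) (M$1$2 - r * M$2$2) (M$2$1) (M$2$2)))"
      using True LD_gen[OF zs_mems_A, of M] unfolding SC_A_def[symmetric] by simp
    show ?thesis unfolding e S10[OF d] using d True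
      by (cases "M$1$1 = 0"; cases "M$1$2 = 0"; cases "M$2$1 = 0"; cases "M$2$2 = 0")
         (simp_all add: V_def SC_A_def SC_B_def SC_C_def SC_Dp_def SC_Dm_def SC_Ep_def SC_Em_def supp_sum_def cstar_def algebra_simps)
  qed
qed

lemma LA_B: "gconv SC_A (SC_B :: ('a::{field,finite})^2^2 \<Rightarrow> rat) = (\<lambda>M. (of_nat CARD('a) - 1) * SC_B M)"
  using LA_gen[OF zs_mems_B] unfolding SC_B_def[symmetric] .

lemma LB_B: "gconv SC_B (SC_B :: ('a::{field,finite})^2^2 \<Rightarrow> rat) = (\<lambda>M. (of_nat CARD('a) - 1) * SC_A M)"
  using LB_gen[OF zs_mems_B] unfolding SC_B_def[symmetric] SC_A_def[symmetric] .

lemma LD_B: "gconv SC_Dp (SC_B :: ('a::{field,finite})^2^2 \<Rightarrow> rat) = V (0) (0) (0) (0) (0) ((of_nat CARD('a) - 1)) (0)"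
proof (rule ext)
  fix M :: "'a^2^2"
  show "gconv SC_Dp SC_B M = V (0) (0) (0) (0) (0) ((of_nat CARD('a) - 1)) (0) M"
  proof (cases "det M = 1")
    case False then show ?thesis by (simp add: gconv_alt V_def SC_A_def SC_B_def SC_C_def SC_Dp_def SC_Dm_def SC_Ep_def SC_Em_def supp_sum_def)
  next
    case True
    then have d: "M$1$1 * M$2$2 - M$1$2 * M$2$1 = 1" by (simp add: det2')
    have e: "gconv SC_Dp SC_B M = (of_nat CARD('a) - 1) * (\<Sum>r\<in>Fstar. supp_sum {0} Fstar Fstar {0} (mk (M$1$1 - r * M$2$1) (M$1$2 - r * M$2$2) (M$2$1) (M$2$2)))"
      using True LD_gen[OF zs_mems_B, of M] unfolding SC_B_def[symmetric] by simp
    show ?thesis unfolding e S01[OF d] using d True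
      by (cases "M$1$1 = 0"; cases "M$1$2 = 0"; cases "M$2$1 = 0"; cases "M$2$2 = 0")
         (simp_all add: V_def SC_A_def SC_B_def SC_C_def SC_Dp_def SC_Dm_def SC_Ep_def SC_Em_def supp_sum_def cstar_def algebra_simps)
  qed
qed

lemma LA_C: "gconv SC_A (SC_C :: ('a::{field,finite})^2^2 \<Rightarrow> rat) = (\<lambda>M. (of_nat CARD('a) - 1) * SC_C M)"
  using LA_gen[OF zs_mems_C] unfolding SC_C_def[symmetric] .

lemma LB_C: "gconv SC_B (SC_C :: ('a::{field,finite})^2^2 \<Rightarrow> rat) = (\<lambda>M. (of_nat CARD('a) - 1) * SC_C M)"
  using LB_gen[OF zs_mems_C] unfolding SC_C_def[symmetric] SC_C_def[symmetric] .

lemma LD_C: "gconv SC_Dp (SC_C :: ('a::{field,finite})^2^2 \<Rightarrow> rat) = V (0) (0) ((of_nat CARD('a) - 1)*(of_nat CARD('a)-3)) (0) ((of_nat CARD('a) - 1)*(of_nat CARD('a)-2)) (0) ((of_nat CARD('a) - 1)*(of_nat CARD('a)-2))"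
proof (rule ext)
  fix M :: "'a^2^2"
  show "gconv SC_Dp SC_C M = V (0) (0) ((of_nat CARD('a) - 1)*(of_nat CARD('a)-3)) (0) ((of_nat CARD('a) - 1)*(of_nat CARD('a)-2)) (0) ((of_nat CARD('a) - 1)*(of_nat CARD('a)-2)) M"
  proof (cases "det M = 1")
    case False then show ?thesis by (simp add: gconv_alt V_def SC_A_def SC_B_def SC_C_def SC_Dp_def SC_Dm_def SC_Ep_def SC_Em_def supp_sum_def)
  next
    case True
    then have d: "M$1$1 * M$2$2 - M$1$2 * M$2$1 = 1" by (simp add: det2')
    have e: "gconv SC_Dp SC_C M = (of_nat CARD('a) - 1) * (\<Sum>r\<in>Fstar. supp_sum Fstar Fstar Fstar Fstar (mk (M$1$1 - r * M$2$1) (M$1$2 - r * M$2$2) (M$2$1) (M$2$2)))"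
      using True LD_gen[OF zs_mems_C, of M] unfolding SC_C_def[symmetric] by simp
    show ?thesis unfolding e S11[OF d] using d True
      by (cases "M$1$1 = 0"; cases "M$1$2 = 0"; cases "M$2$1 = 0"; cases "M$2$2 = 0")
         (simp_all add: V_def SC_A_def SC_B_def SC_C_def SC_Dp_def SC_Dm_def SC_Ep_def SC_Em_def supp_sum_def cstar_def algebra_simps)
  qed
qed

lemma LA_Dp: "gconv SC_A (SC_Dp :: ('a::{field,finite})^2^2 \<Rightarrow> rat) = (\<lambda>M. (of_nat CARD('a) - 1) * SC_Dp M)"
  using LA_gen[OF zs_mems_Dp] unfolding SC_Dp_def[symmetric] .

lemma LB_Dp: "gconv SC_B (SC_Dp :: ('a::{field,finite})^2^2 \<Rightarrow> rat) = (\<lambda>M. (of_nat CARD('a) - 1) * SC_Em M)"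
  using LB_gen[OF zs_mems_Dp] unfolding SC_Dp_def[symmetric] SC_Em_def[symmetric] .

lemma LD_Dp: "gconv SC_Dp (SC_Dp :: ('a::{field,finite})^2^2 \<Rightarrow> rat) = V ((of_nat CARD('a) - 1)*(of_nat CARD('a) - 1)) (0) (0) ((of_nat CARD('a) - 1)*(of_nat CARD('a)-2)) (0) (0) (0)"
proof (rule ext)
  fix M :: "'a^2^2"
  show "gconv SC_Dp SC_Dp M = V ((of_nat CARD('a) - 1)*(of_nat CARD('a) - 1)) (0) (0) ((of_nat CARD('a) - 1)*(of_nat CARD('a)-2)) (0) (0) (0) M"
  proof (cases "det M = 1")
    case False then show ?thesis by (simp add: gconv_alt V_def SC_A_def SC_B_def SC_C_def SC_Dp_def SC_Dm_def SC_Ep_def SC_Em_def supp_sum_def)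
  next
    case True
    then have d: "M$1$1 * M$2$2 - M$1$2 * M$2$1 = 1" by (simp add: det2')
    have e: "gconv SC_Dp SC_Dp M = (of_nat CARD('a) - 1) * (\<Sum>r\<in>Fstar. supp_sum Fstar Fstar {0} Fstar (mk (M$1$1 - r * M$2$1) (M$1$2 - r * M$2$2) (M$2$1) (M$2$2)))"
      using True LD_gen[OF zs_mems_Dp, of M] unfolding SC_Dp_def[symmetric] by simp
    show ?thesis unfolding e S11[OF d] using d True
      by (cases "M$1$1 = 0"; cases "M$1$2 = 0"; cases "M$2$1 = 0"; cases "M$2$2 = 0")
         (simp_all add: V_def SC_A_def SC_B_def SC_C_def SC_Dp_def SC_Dm_def SC_Ep_def SC_Em_def supp_sum_def cstar_def algebra_simps)
  qed
qed

lemma LA_Dm: "gconv SC_A (SC_Dm :: ('a::{field,finite})^2^2 \<Rightarrow> rat) = (\<lambda>M. (of_nat CARD('a) - 1) * SC_Dm M)"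
  using LA_gen[OF zs_mems_Dm] unfolding SC_Dm_def[symmetric] .

lemma LB_Dm: "gconv SC_B (SC_Dm :: ('a::{field,finite})^2^2 \<Rightarrow> rat) = (\<lambda>M. (of_nat CARD('a) - 1) * SC_Ep M)"
  using LB_gen[OF zs_mems_Dm] unfolding SC_Dm_def[symmetric] SC_Ep_def[symmetric] .

lemma LD_Dm: "gconv SC_Dp (SC_Dm :: ('a::{field,finite})^2^2 \<Rightarrow> rat) = V (0) (0) ((of_nat CARD('a) - 1)) (0) (0) (0) ((of_nat CARD('a) - 1))"
proof (rule ext)
  fix M :: "'a^2^2"
  show "gconv SC_Dp SC_Dm M = V (0) (0) ((of_nat CARD('a) - 1)) (0) (0) (0) ((of_nat CARD('a) - 1)) M"
  proof (cases "det M = 1")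
    case False then show ?thesis by (simp add: gconv_alt V_def SC_A_def SC_B_def SC_C_def SC_Dp_def SC_Dm_def SC_Ep_def SC_Em_def supp_sum_def)
  next
    case True
    then have d: "M$1$1 * M$2$2 - M$1$2 * M$2$1 = 1" by (simp add: det2')
    have e: "gconv SC_Dp SC_Dm M = (of_nat CARD('a) - 1) * (\<Sum>r\<in>Fstar. supp_sum Fstar {0} Fstar Fstar (mk (M$1$1 - r * M$2$1) (M$1$2 - r * M$2$2) (M$2$1) (M$2$2)))"
      using True LD_gen[OF zs_mems_Dm, of M] unfolding SC_Dm_def[symmetric] by simp
    show ?thesis unfolding e S10[OF d] using d True
      by (cases "M$1$1 = 0"; cases "M$1$2 = 0"; cases "M$2$1 = 0"; cases "M$2$2 = 0")
         (simp_all add: V_def SC_A_def SC_B_def SC_C_def SC_Dp_def SC_Dm_def SC_Ep_def SC_Em_def supp_sum_def cstar_def algebra_simps)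
  qed
qed

lemma LA_Ep: "gconv SC_A (SC_Ep :: ('a::{field,finite})^2^2 \<Rightarrow> rat) = (\<lambda>M. (of_nat CARD('a) - 1) * SC_Ep M)"
  using LA_gen[OF zs_mems_Ep] unfolding SC_Ep_def[symmetric] .

lemma LB_Ep: "gconv SC_B (SC_Ep :: ('a::{field,finite})^2^2 \<Rightarrow> rat) = (\<lambda>M. (of_nat CARD('a) - 1) * SC_Dm M)"
  using LB_gen[OF zs_mems_Ep] unfolding SC_Ep_def[symmetric] SC_Dm_def[symmetric] .

lemma LD_Ep: "gconv SC_Dp (SC_Ep :: ('a::{field,finite})^2^2 \<Rightarrow> rat) = V (0) ((of_nat CARD('a) - 1)*(of_nat CARD('a) - 1)) (0) (0) (0) ((of_nat CARD('a) - 1)*(of_nat CARD('a)-2)) (0)"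
proof (rule ext)
  fix M :: "'a^2^2"
  show "gconv SC_Dp SC_Ep M = V (0) ((of_nat CARD('a) - 1)*(of_nat CARD('a) - 1)) (0) (0) (0) ((of_nat CARD('a) - 1)*(of_nat CARD('a)-2)) (0) M"
  proof (cases "det M = 1")
    case False then show ?thesis by (simp add: gconv_alt V_def SC_A_def SC_B_def SC_C_def SC_Dp_def SC_Dm_def SC_Ep_def SC_Em_def supp_sum_def)
  next
    case True
    then have d: "M$1$1 * M$2$2 - M$1$2 * M$2$1 = 1" by (simp add: det2')
    have e: "gconv SC_Dp SC_Ep M = (of_nat CARD('a) - 1) * (\<Sum>r\<in>Fstar. supp_sum Fstar Fstar Fstar {0} (mk (M$1$1 - r * M$2$1) (M$1$2 - r * M$2$2) (M$2$1) (M$2$2)))"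
      using True LD_gen[OF zs_mems_Ep, of M] unfolding SC_Ep_def[symmetric] by simp
    show ?thesis unfolding e S11[OF d] using d True
      by (cases "M$1$1 = 0"; cases "M$1$2 = 0"; cases "M$2$1 = 0"; cases "M$2$2 = 0")
         (simp_all add: V_def SC_A_def SC_B_def SC_C_def SC_Dp_def SC_Dm_def SC_Ep_def SC_Em_def supp_sum_def cstar_def algebra_simps)
  qed
qed

lemma LA_Em: "gconv SC_A (SC_Em :: ('a::{field,finite})^2^2 \<Rightarrow> rat) = (\<lambda>M. (of_nat CARD('a) - 1) * SC_Em M)"
  using LA_gen[OF zs_mems_Em] unfolding SC_Em_def[symmetric] .

lemma LB_Em: "gconv SC_B (SC_Em :: ('a::{field,finite})^2^2 \<Rightarrow> rat) = (\<lambda>M. (of_nat CARD('a) - 1) * SC_Dp M)"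
  using LB_gen[OF zs_mems_Em] unfolding SC_Em_def[symmetric] SC_Dp_def[symmetric] .

lemma LD_Em: "gconv SC_Dp (SC_Em :: ('a::{field,finite})^2^2 \<Rightarrow> rat) = V (0) (0) ((of_nat CARD('a) - 1)) (0) ((of_nat CARD('a) - 1)) (0) (0)"
proof (rule ext)
  fix M :: "'a^2^2"
  show "gconv SC_Dp SC_Em M = V (0) (0) ((of_nat CARD('a) - 1)) (0) ((of_nat CARD('a) - 1)) (0) (0) M"
  proof (cases "det M = 1")
    case False then show ?thesis by (simp add: gconv_alt V_def SC_A_def SC_B_def SC_C_def SC_Dp_def SC_Dm_def SC_Ep_def SC_Em_def supp_sum_def)
  next
    case True
    then have d: "M$1$1 * M$2$2 - M$1$2 * M$2$1 = 1" by (simp add: det2')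
    have e: "gconv SC_Dp SC_Em M = (of_nat CARD('a) - 1) * (\<Sum>r\<in>Fstar. supp_sum {0} Fstar Fstar Fstar (mk (M$1$1 - r * M$2$1) (M$1$2 - r * M$2$2) (M$2$1) (M$2$2)))"
      using True LD_gen[OF zs_mems_Em, of M] unfolding SC_Em_def[symmetric] by simp
    show ?thesis unfolding e S01[OF d] using d True
      by (cases "M$1$1 = 0"; cases "M$1$2 = 0"; cases "M$2$1 = 0"; cases "M$2$2 = 0")
         (simp_all add: V_def SC_A_def SC_B_def SC_C_def SC_Dp_def SC_Dm_def SC_Ep_def SC_Em_def supp_sum_def cstar_def algebra_simps)
  qed
qed



definition Phi :: "rat \<Rightarrow> rat \<Rightarrow> rat \<Rightarrow> rat \<Rightarrow> rat \<Rightarrow> rat \<Rightarrow> rat \<Rightarrow> rat \<Rightarrow> target" where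
  "Phi q c1 c2 c3 c4 c5 c6 c7 = (let k = q - 1 in
     (k*(c1 + c2 + k*(q-2)*c3 + k*(c4+c5+c6+c7)),
      k*(c1 + c2 + 2*c3 - c4 - c5 - c6 - c7),
      k*(c1 - c2 - c4 - c5 + c6 + c7),
      mk (k*(c1 + (2-q)*c3 + k*c4 - c5 - c6)) (k*(c2 + (2-q)*c3 - c4 + k*c6 - c7))
         (k*(c2 + (2-q)*c3 - c5 - c6 + k*c7)) (k*(c1 + (2-q)*c3 - c4 + k*c5 - c7))))"

lemma tmult_mk: "tmult (a1, a2, a3, mk w x y z) (b1, b2, b3, mk w' x' y' z') =
   (a1*b1, a2*b2, a3*b3, mk (w*w' + x*y') (w*x' + x*z') (y*w' + z*y') (y*x' + z*z'))"
  by (simp add: tmult_def mat_eq_iff)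

lemma T_A: "Phi q ((q-1)*c1) ((q-1)*c2) ((q-1)*c3) ((q-1)*c4) ((q-1)*c5) ((q-1)*c6) ((q-1)*c7)
   = tmult (Phi q 1 0 0 0 0 0 0) (Phi q c1 c2 c3 c4 c5 c6 c7)"
  unfolding Phi_def Let_def tmult_mk by (simp add: algebra_simps)

lemma T_B: "Phi q ((q-1)*c2) ((q-1)*c1) ((q-1)*c3) ((q-1)*c7) ((q-1)*c6) ((q-1)*c5) ((q-1)*c4)
   = tmult (Phi q 0 1 0 0 0 0 0) (Phi q c1 c2 c3 c4 c5 c6 c7)"
  unfolding Phi_def Let_def tmult_mk by (simp add: algebra_simps)

lemma T_D: "Phi q ((q-1)*(q-1)*c4) ((q-1)*(q-1)*c6) ((q-1)*(q-3)*c3 + (q-1)*c5 + (q-1)*c7)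
     ((q-1)*c1 + (q-1)*(q-2)*c4) ((q-1)*(q-2)*c3 + (q-1)*c7) ((q-1)*c2 + (q-1)*(q-2)*c6) ((q-1)*(q-2)*c3 + (q-1)*c5)
   = tmult (Phi q 0 0 0 1 0 0 0) (Phi q c1 c2 c3 c4 c5 c6 c7)"
  unfolding Phi_def Let_def tmult_mk by (simp add: algebra_simps)



lemma mat_eq_iff': "(X::'b^2^2) = Y \<longleftrightarrow> X$1$1 = Y$1$1 \<and> X$1$2 = Y$1$2 \<and> X$2$1 = Y$2$1 \<and> X$2$2 = Y$2$2"
  by (auto simp: vec_eq_iff forall_2)

lemma tmult_lin: "tmult (tscale s x + y) z = tscale s (tmult x z) + tmult y z"
  by (cases x; cases y; cases z) (simp add: tmult_def tscale_def plus_prod_def mat_eq_iff' algebra_simps)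

lemma tmult_assoc: "tmult (tmult x y) z = tmult x (tmult y z)"
  by (cases x; cases y; cases z) (simp add: tmult_def tscale_def matrix_mul_assoc)

lemma Phi_lin: "Phi q (s*c1 + d1) (s*c2 + d2) (s*c3 + d3) (s*c4 + d4) (s*c5 + d5) (s*c6 + d6) (s*c7 + d7)
   = tscale s (Phi q c1 c2 c3 c4 c5 c6 c7) + Phi q d1 d2 d3 d4 d5 d6 d7"
  unfolding Phi_def Let_def by (simp add: tscale_def plus_prod_def mat_eq_iff' algebra_simps)

lemma Phi_add: "Phi q (c1 + d1) (c2 + d2) (c3 + d3) (c4 + d4) (c5 + d5) (c6 + d6) (c7 + d7)
   = Phi q c1 c2 c3 c4 c5 c6 c7 + Phi q d1 d2 d3 d4 d5 d6 d7"
  unfolding Phi_def Let_def by (simp add: plus_prod_def mat_eq_iff' algebra_simps)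

lemma Phi_scale: "Phi q (s*c1) (s*c2) (s*c3) (s*c4) (s*c5) (s*c6) (s*c7)
   = tscale s (Phi q c1 c2 c3 c4 c5 c6 c7)"
  unfolding Phi_def Let_def by (simp add: tscale_def mat_eq_iff' algebra_simps)

definition Pn :: "rat \<Rightarrow> target \<Rightarrow> rat list" where
  "Pn q t = (case t of (s1, s2, s3, m) \<Rightarrow>
     (let a = m$1$1; b = m$1$2; c = m$2$1; d = m$2$2 in
        [2*(q-1) * s1+(q-2)*(q-1)*(q+1) * s2+q*(q-1)*(q-1) * s3+2*q*(q-1)*(a+d),
         2*(q-1) * s1+(q-2)*(q-1)*(q+1) * s2-q*(q-1)*(q-1) * s3+2*q*(q-1)*(b+c),
         2*(q-1) * s1+2*(q+1) * s2-2*q*(a+b+c+d),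
         2*(q-1) * s1-(q-2)*(q+1) * s2-q*(q-1) * s3+2*q*(q-1)*a-2*q*(c+d),
         2*(q-1) * s1-(q-2)*(q+1) * s2-q*(q-1) * s3-2*q*(a+b)+2*q*(q-1)*d,
         2*(q-1) * s1-(q-2)*(q+1) * s2+q*(q-1) * s3+2*q*(q-1)*b-2*q*(c+d),
         2*(q-1) * s1-(q-2)*(q+1) * s2+q*(q-1) * s3-2*q*(a+b)+2*q*(q-1)*c]))"

definition Dn :: "rat \<Rightarrow> rat" where "Dn q = 2*q*(q-1)*(q-1)*(q+1)"

definition psi :: "rat \<Rightarrow> target \<Rightarrow> rat list" where
  "psi q t = map (\<lambda>x. x / Dn q) (Pn q t)"

lemma Dn_nz: "q > 2 \<Longrightarrow> Dn q \<noteq> 0"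
  unfolding Dn_def by auto

lemma Pn_Phi: "Pn q (Phi q c1 c2 c3 c4 c5 c6 c7) = [c1 * Dn q, c2 * Dn q, c3 * Dn q, c4 * Dn q, c5 * Dn q, c6 * Dn q, c7 * Dn q]"
  unfolding Pn_def Phi_def Dn_def Let_def by (simp add: algebra_simps)

lemma Phi_Pn: "Phi q (Pn q t ! 0) (Pn q t ! 1) (Pn q t ! 2) (Pn q t ! 3) (Pn q t ! 4) (Pn q t ! 5) (Pn q t ! 6) = tscale (Dn q) t"
proof -
  obtain s1 s2 s3 m where t: "t = (s1, s2, s3, m)" by (cases t) auto
  show ?thesis unfolding t Pn_def Phi_def Dn_def Let_def tscale_def
    by (simp add: mat_eq_iff' algebra_simps)
qed

lemma psi_Phi:
  assumes "q > 2"
  shows "psi q (Phi q c1 c2 c3 c4 c5 c6 c7) = [c1, c2, c3, c4, c5, c6, c7]"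
  unfolding psi_def Pn_Phi using Dn_nz[OF assms] by simp

lemma tscale_tscale: "tscale a (tscale b t) = tscale (a * b) t"
  by (cases t) (simp add: tscale_def mat_eq_iff')

lemma tscale_1: "tscale 1 t = t"
  by (cases t) (simp add: tscale_def mat_eq_iff')

lemma Phi_psi:
  assumes "q > 2"
  shows "Phi q (psi q t ! 0) (psi q t ! 1) (psi q t ! 2) (psi q t ! 3) (psi q t ! 4) (psi q t ! 5) (psi q t ! 6) = t"
proof -
  have len: "length (Pn q t) = 7" by (cases t) (simp add: Pn_def Let_def)
  have e: "psi q t ! i = (1 / Dn q) * (Pn q t ! i)" if "i < 7" for i
    unfolding psi_def using that len by simp
  have "Phi q (psi q t ! 0) (psi q t ! 1) (psi q t ! 2) (psi q t ! 3) (psi q t ! 4) (psi q t ! 5) (psi q t ! 6)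
      = tscale (1 / Dn q) (Phi q (Pn q t ! 0) (Pn q t ! 1) (Pn q t ! 2) (Pn q t ! 3) (Pn q t ! 4) (Pn q t ! 5) (Pn q t ! 6))"
    by (simp only: e Phi_scale[symmetric])
  also have "\<dots> = t" unfolding Phi_Pn tscale_tscale using Dn_nz[OF assms] by (simp add: tscale_1)
  finally show ?thesis .
qed



definition phiC :: "('a::{field,finite})^2^2 \<Rightarrow> ('a^2^2 \<Rightarrow> rat) \<Rightarrow> target" where
  "phiC rC f = Phi (of_nat CARD('a)) (f (mk 1 0 0 1)) (f (mk 0 1 (-1) 0)) (f rC) (f (mk 1 1 0 1))
      (f (mk 1 0 1 1)) (f (mk 1 1 (-1) 0)) (f (mk 0 1 (-1) 1))"

definition goodC :: "('a::{field,finite})^2^2 \<Rightarrow> bool" where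
  "goodC rC \<longleftrightarrow> det rC = 1 \<and> rC$1$1 \<noteq> 0 \<and> rC$1$2 \<noteq> 0 \<and> rC$2$1 \<noteq> 0 \<and> rC$2$2 \<noteq> 0"

lemmas SC_defs = SC_A_def SC_B_def SC_C_def SC_Dp_def SC_Dm_def SC_Ep_def SC_Em_def

lemma phi_V:
  fixes rC :: "('a::{field,finite})^2^2"
  assumes "goodC rC"
  shows "phiC rC (V c1 c2 c3 c4 c5 c6 c7) = Phi (of_nat CARD('a)) c1 c2 c3 c4 c5 c6 c7"
  using assms unfolding phiC_def goodC_def by (simp add: V_def SC_defs supp_sum_def)

lemma phi_add: "phiC rC (\<lambda>M. f M + g M) = phiC rC f + phiC rC g"
  unfolding phiC_def by (rule Phi_add)

lemma phi_scale: "phiC rC (\<lambda>M. s * f M) = tscale s (phiC rC f)"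
  unfolding phiC_def by (rule Phi_scale)

lemma tmult_add_l: "tmult (x + y) z = tmult x z + tmult y z"
  by (cases x; cases y; cases z) (simp add: tmult_def plus_prod_def mat_eq_iff' algebra_simps)

lemma tmult_scale_l: "tmult (tscale s x) z = tscale s (tmult x z)"
  by (cases x; cases z) (simp add: tmult_def tscale_def mat_eq_iff' algebra_simps)

lemma V_in: "V c1 c2 c3 c4 c5 c6 c7 \<in> SC_Q"
  unfolding SC_Q_V by blast

lemma SC_Q_E: assumes "x \<in> SC_Q" obtains c1 c2 c3 c4 c5 c6 c7 where "x = V c1 c2 c3 c4 c5 c6 c7"
  using assms unfolding SC_Q_V by blast

lemma SC_Q_add: "f \<in> SC_Q \<Longrightarrow> g \<in> SC_Q \<Longrightarrow> (\<lambda>M. f M + g M) \<in> SC_Q"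
proof -
  assume "f \<in> SC_Q" "g \<in> SC_Q"
  then obtain c1 c2 c3 c4 c5 c6 c7 d1 d2 d3 d4 d5 d6 d7 where
    "f = V c1 c2 c3 c4 c5 c6 c7" "g = V d1 d2 d3 d4 d5 d6 d7" by (metis SC_Q_E)
  then have "(\<lambda>M. f M + g M) = V (c1+d1) (c2+d2) (c3+d3) (c4+d4) (c5+d5) (c6+d6) (c7+d7)"
    by (simp add: V_def algebra_simps)
  then show ?thesis by (simp add: V_in)
qed

lemma SC_Q_scale: "f \<in> SC_Q \<Longrightarrow> (\<lambda>M. s * f M) \<in> SC_Q"
proof -
  assume "f \<in> SC_Q"
  then obtain c1 c2 c3 c4 c5 c6 c7 where "f = V c1 c2 c3 c4 c5 c6 c7" by (metis SC_Q_E)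
  then have "(\<lambda>M. s * f M) = V (s*c1) (s*c2) (s*c3) (s*c4) (s*c5) (s*c6) (s*c7)"
    by (simp add: V_def algebra_simps)
  then show ?thesis by (simp add: V_in)
qed

lemma basis_V:
  "SC_A = V 1 0 0 0 0 0 0" "SC_B = V 0 1 0 0 0 0 0" "SC_C = V 0 0 1 0 0 0 0" "SC_Dp = V 0 0 0 1 0 0 0"
  "SC_Dm = V 0 0 0 0 1 0 0" "SC_Ep = V 0 0 0 0 0 1 0" "SC_Em = V 0 0 0 0 0 0 1"
  by (simp_all add: V_def)

lemma basis_in: "SC_A \<in> SC_Q" "SC_B \<in> SC_Q" "SC_C \<in> SC_Q" "SC_Dp \<in> SC_Q" "SC_Dm \<in> SC_Q" "SC_Ep \<in> SC_Q" "SC_Em \<in> SC_Q"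
  by (simp_all only: basis_V V_in)

lemma GA: "gconv SC_A (V c1 c2 c3 c4 c5 c6 c7 :: ('a::{field,finite})^2^2 \<Rightarrow> rat) =
   V ((of_nat CARD('a) - 1)*c1) ((of_nat CARD('a) - 1)*c2) ((of_nat CARD('a) - 1)*c3) ((of_nat CARD('a) - 1)*c4)
     ((of_nat CARD('a) - 1)*c5) ((of_nat CARD('a) - 1)*c6) ((of_nat CARD('a) - 1)*c7)"
  unfolding gconv_V_r LA_A LA_B LA_C LA_Dp LA_Dm LA_Ep LA_Em by (rule ext) (simp add: V_def algebra_simps)

lemma GB: "gconv SC_B (V c1 c2 c3 c4 c5 c6 c7 :: ('a::{field,finite})^2^2 \<Rightarrow> rat) =
   V ((of_nat CARD('a) - 1)*c2) ((of_nat CARD('a) - 1)*c1) ((of_nat CARD('a) - 1)*c3) ((of_nat CARD('a) - 1)*c7)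
     ((of_nat CARD('a) - 1)*c6) ((of_nat CARD('a) - 1)*c5) ((of_nat CARD('a) - 1)*c4)"
  unfolding gconv_V_r LB_A LB_B LB_C LB_Dp LB_Dm LB_Ep LB_Em by (rule ext) (simp add: V_def algebra_simps)

lemma GD: "gconv SC_Dp (V c1 c2 c3 c4 c5 c6 c7 :: ('a::{field,finite})^2^2 \<Rightarrow> rat) =
   (let q = (of_nat CARD('a) :: rat) in
   V ((q-1)*(q-1)*c4) ((q-1)*(q-1)*c6) ((q-1)*(q-3)*c3 + (q-1)*c5 + (q-1)*c7)
     ((q-1)*c1 + (q-1)*(q-2)*c4) ((q-1)*(q-2)*c3 + (q-1)*c7) ((q-1)*c2 + (q-1)*(q-2)*c6) ((q-1)*(q-2)*c3 + (q-1)*c5))"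
  unfolding gconv_V_r LD_A LD_B LD_C LD_Dp LD_Dm LD_Ep LD_Em Let_def by (rule ext) (simp add: V_def algebra_simps)

definition Good :: "('a::{field,finite})^2^2 \<Rightarrow> ('a^2^2 \<Rightarrow> rat) \<Rightarrow> bool" where
  "Good rC f \<longleftrightarrow> (\<forall>y\<in>SC_Q. gconv f y \<in> SC_Q \<and> phiC rC (gconv f y) = tmult (phiC rC f) (phiC rC y))"

lemma Good_A: "goodC (rC :: ('a::{field,finite})^2^2) \<Longrightarrow> Good rC SC_A"
  unfolding Good_def
proof (intro ballI)
  fix y :: "'a^2^2 \<Rightarrow> rat" assume g: "goodC rC" and "y \<in> SC_Q"
  then obtain c1 c2 c3 c4 c5 c6 c7 where y: "y = V c1 c2 c3 c4 c5 c6 c7" by (metis SC_Q_E)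
  show "gconv SC_A y \<in> SC_Q \<and> phiC rC (gconv SC_A y) = tmult (phiC rC SC_A) (phiC rC y)"
    unfolding y GA using g by (simp add: V_in phi_V basis_V T_A)
qed

lemma Good_B: "goodC (rC :: ('a::{field,finite})^2^2) \<Longrightarrow> Good rC SC_B"
  unfolding Good_def
proof (intro ballI)
  fix y :: "'a^2^2 \<Rightarrow> rat" assume g: "goodC rC" and "y \<in> SC_Q"
  then obtain c1 c2 c3 c4 c5 c6 c7 where y: "y = V c1 c2 c3 c4 c5 c6 c7" by (metis SC_Q_E)
  show "gconv SC_B y \<in> SC_Q \<and> phiC rC (gconv SC_B y) = tmult (phiC rC SC_B) (phiC rC y)"
    unfolding y GB using g by (simp add: V_in phi_V basis_V T_B)
qed

lemma Good_D: "goodC (rC :: ('a::{field,finite})^2^2) \<Longrightarrow> Good rC SC_Dp"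
  unfolding Good_def
proof (intro ballI)
  fix y :: "'a^2^2 \<Rightarrow> rat" assume g: "goodC rC" and "y \<in> SC_Q"
  then obtain c1 c2 c3 c4 c5 c6 c7 where y: "y = V c1 c2 c3 c4 c5 c6 c7" by (metis SC_Q_E)
  show "gconv SC_Dp y \<in> SC_Q \<and> phiC rC (gconv SC_Dp y) = tmult (phiC rC SC_Dp) (phiC rC y)"
    unfolding y GD Let_def using g by (simp add: V_in phi_V basis_V T_D)
qed

lemma Good_add: "Good (rC :: ('a::{field,finite})^2^2) f \<Longrightarrow> Good rC g \<Longrightarrow> Good rC (\<lambda>M. f M + g M)"
  unfolding Good_def
proof (intro ballI)
  fix y :: "'a^2^2 \<Rightarrow> rat" assume f: "\<forall>y\<in>SC_Q. gconv f y \<in> SC_Q \<and> phiC rC (gconv f y) = tmult (phiC rC f) (phiC rC y)"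
    and g: "\<forall>y\<in>SC_Q. gconv g y \<in> SC_Q \<and> phiC rC (gconv g y) = tmult (phiC rC g) (phiC rC y)"
    and y: "y \<in> SC_Q"
  have e: "gconv (\<lambda>M. f M + g M) y = (\<lambda>M. gconv f y M + gconv g y M)"
    by (rule ext) (simp add: gconv_alt sum.distrib algebra_simps)
  show "gconv (\<lambda>M. f M + g M) y \<in> SC_Q \<and> phiC rC (gconv (\<lambda>M. f M + g M) y) = tmult (phiC rC (\<lambda>M. f M + g M)) (phiC rC y)"
    unfolding e using f g y by (simp add: SC_Q_add phi_add tmult_add_l)
qed

lemma Good_scale: "Good (rC :: ('a::{field,finite})^2^2) f \<Longrightarrow> Good rC (\<lambda>M. s * f M)"
  unfolding Good_def
proof (intro ballI)
  fix y :: "'a^2^2 \<Rightarrow> rat" assume f: "\<forall>y\<in>SC_Q. gconv f y \<in> SC_Q \<and> phiC rC (gconv f y) = tmult (phiC rC f) (phiC rC y)"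
    and y: "y \<in> SC_Q"
  show "gconv (\<lambda>M. s * f M) y \<in> SC_Q \<and> phiC rC (gconv (\<lambda>M. s * f M) y) = tmult (phiC rC (\<lambda>M. s * f M)) (phiC rC y)"
    unfolding gconv_scale_l using f y by (simp add: SC_Q_scale phi_scale tmult_scale_l)
qed

lemma Good_comp: "Good (rC :: ('a::{field,finite})^2^2) f \<Longrightarrow> Good rC g \<Longrightarrow> g \<in> SC_Q \<Longrightarrow> Good rC (gconv f g)"
  unfolding Good_def
proof (intro ballI)
  fix y :: "'a^2^2 \<Rightarrow> rat" assume f: "\<forall>y\<in>SC_Q. gconv f y \<in> SC_Q \<and> phiC rC (gconv f y) = tmult (phiC rC f) (phiC rC y)"
    and g: "\<forall>y\<in>SC_Q. gconv g y \<in> SC_Q \<and> phiC rC (gconv g y) = tmult (phiC rC g) (phiC rC y)"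
    and gin: "g \<in> SC_Q" and y: "y \<in> SC_Q"
  have gy: "gconv g y \<in> SC_Q" using g y by blast
  show "gconv (gconv f g) y \<in> SC_Q \<and> phiC rC (gconv (gconv f g) y) = tmult (phiC rC (gconv f g)) (phiC rC y)"
    unfolding gconv_assoc[symmetric] using f g y gy gin by (simp add: tmult_assoc)
qed



lemma k_nz: "CARD('a::{field,finite}) > 2 \<Longrightarrow> (of_nat CARD('a) - 1 :: rat) \<noteq> 0"
  by simp

lemma Ep_eq: assumes "CARD('a::{field,finite}) > 2"
  shows "(SC_Ep :: 'a^2^2 \<Rightarrow> rat) = (\<lambda>M. (1 / (of_nat CARD('a) - 1)) * gconv SC_Dp SC_B M)"
  unfolding LD_B using k_nz[OF assms] by (intro ext) (simp add: V_def)

lemma Em_eq: assumes "CARD('a::{field,finite}) > 2"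
  shows "(SC_Em :: 'a^2^2 \<Rightarrow> rat) = (\<lambda>M. (1 / (of_nat CARD('a) - 1)) * gconv SC_B SC_Dp M)"
  unfolding LB_Dp using k_nz[OF assms] by (intro ext) simp

lemma Dm_eq: assumes "CARD('a::{field,finite}) > 2"
  shows "(SC_Dm :: 'a^2^2 \<Rightarrow> rat) = (\<lambda>M. (1 / (of_nat CARD('a) - 1)) * gconv SC_B SC_Ep M)"
  unfolding LB_Ep using k_nz[OF assms] by (intro ext) simp

lemma C_eq: assumes "CARD('a::{field,finite}) > 2"
  shows "(SC_C :: 'a^2^2 \<Rightarrow> rat) = (\<lambda>M. (1 / (of_nat CARD('a) - 1)) * gconv SC_Dp SC_Em M + (-1) * SC_Dm M)"
  unfolding LD_Em using k_nz[OF assms] by (intro ext) (simp add: V_def field_simps)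

lemma Good_V:
  fixes rC :: "('a::{field,finite})^2^2"
  assumes "CARD('a) > 2" "goodC rC"
  shows "Good rC (V c1 c2 c3 c4 c5 c6 c7)"
proof -
  have A: "Good rC SC_A" and B: "Good rC SC_B" and D: "Good rC SC_Dp"
    using assms(2) by (simp_all add: Good_A Good_B Good_D)
  have Ep: "Good rC SC_Ep"
    by (subst Ep_eq[OF assms(1)], intro Good_scale Good_comp D B basis_in)
  have Em: "Good rC SC_Em"
    by (subst Em_eq[OF assms(1)], intro Good_scale Good_comp D B basis_in)
  have Dm: "Good rC SC_Dm"
    by (subst Dm_eq[OF assms(1)], intro Good_scale Good_comp Ep B basis_in)
  have C: "Good rC SC_C"
    by (subst C_eq[OF assms(1)], intro Good_add Good_scale Good_comp D Em Dm basis_in)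
  show ?thesis unfolding V_def
    by (intro Good_add Good_scale A B C D Dm Ep Em)
qed

theorem theorem3p1:
  assumes "CARD('a::{field,finite}) > 2"
  shows "(\<forall>x\<in>(SC_Q :: (('a^2^2) \<Rightarrow> rat) set). \<forall>y\<in>SC_Q. gconv x y \<in> SC_Q) \<and>
         (\<exists>\<phi> :: ('a^2^2 \<Rightarrow> rat) \<Rightarrow> target.
            bij_betw \<phi> SC_Q UNIV \<and>
            (\<forall>x\<in>SC_Q. \<forall>y\<in>SC_Q. \<phi> (\<lambda>M. x M + y M) = \<phi> x + \<phi> y) \<and>
            (\<forall>c. \<forall>x\<in>SC_Q. \<phi> (\<lambda>M. c * x M) = tscale c (\<phi> x)) \<and>
            (\<forall>x\<in>SC_Q. \<forall>y\<in>SC_Q. \<phi> (gconv x y) = tmult (\<phi> x) (\<phi> y)) \<and>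
            \<phi> (\<lambda>M. SC_A M / (of_nat CARD('a) - 1)) = tone)"
proof -
  have c2: "card ({0, -1} :: 'a set) \<le> 2" by (rule card_insert_le_m1) simp_all
  have "{0, -1} \<noteq> (UNIV :: 'a set)"
  proof
    assume "{0, -1} = (UNIV :: 'a set)"
    then have "CARD('a) \<le> 2" using c2 by simp
    then show False using assms by simp
  qed
  then obtain z :: 'a where z: "z \<noteq> 0" "z \<noteq> -1" by auto
  define rC :: "'a^2^2" where "rC = mk 1 1 z (1 + z)"
  have z1: "1 + z \<noteq> 0" using z(2) by (metis add.commute add_eq_0_iff)
  have gC: "goodC rC" unfolding rC_def goodC_def using z z1 by (simp add: algebra_simps)
  have q2: "(of_nat CARD('a) :: rat) > 2" using assms by simp
  have good: "Good rC x" if "x \<in> SC_Q" for x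
    using that Good_V[OF assms gC] by (metis SC_Q_E)
  have P1: "\<forall>x\<in>(SC_Q :: (('a^2^2) \<Rightarrow> rat) set). \<forall>y\<in>SC_Q. gconv x y \<in> SC_Q"
    using good unfolding Good_def by blast
  have inj: "inj_on (phiC rC) SC_Q"
  proof (rule inj_onI)
    fix x y assume "x \<in> SC_Q" "y \<in> SC_Q" and e: "phiC rC x = phiC rC y"
    then obtain c1 c2 c3 c4 c5 c6 c7 d1 d2 d3 d4 d5 d6 d7 where
      x: "x = V c1 c2 c3 c4 c5 c6 c7" and y: "y = V d1 d2 d3 d4 d5 d6 d7" by (metis SC_Q_E)
    have "Phi (of_nat CARD('a)) c1 c2 c3 c4 c5 c6 c7 = Phi (of_nat CARD('a)) d1 d2 d3 d4 d5 d6 d7"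
      using e unfolding x y phi_V[OF gC] .
    then have "psi (of_nat CARD('a)) (Phi (of_nat CARD('a)) c1 c2 c3 c4 c5 c6 c7) =
               psi (of_nat CARD('a)) (Phi (of_nat CARD('a)) d1 d2 d3 d4 d5 d6 d7)" by simp
    then show "x = y" unfolding x y psi_Phi[OF q2] by simp
  qed
  have surj: "phiC rC ` SC_Q = UNIV"
  proof (rule set_eqI, rule iffI)
    fix t :: target
    let ?q = "of_nat CARD('a) :: rat"
    have "t = phiC rC (V (psi ?q t ! 0) (psi ?q t ! 1) (psi ?q t ! 2) (psi ?q t ! 3) (psi ?q t ! 4) (psi ?q t ! 5) (psi ?q t ! 6))"
      unfolding phi_V[OF gC] Phi_psi[OF q2] ..
    then show "t \<in> phiC rC ` SC_Q" using V_in by blast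
  qed simp
  have unit: "phiC rC (\<lambda>M. SC_A M / (of_nat CARD('a) - 1)) = tone"
  proof -
    have k: "(of_nat CARD('a) - 1 :: rat) \<noteq> 0" using q2 by simp
    have "phiC rC (\<lambda>M. SC_A M / (of_nat CARD('a) - 1)) = Phi (of_nat CARD('a)) (1 / (of_nat CARD('a) - 1)) 0 0 0 0 0 0"
      using gC unfolding phiC_def goodC_def by (simp add: SC_A_def supp_sum_def)
    also have "\<dots> = tone" using k unfolding Phi_def tone_def Let_def
      by (simp add: mat_eq_iff' mat_def)
    finally show ?thesis .
  qed
  show ?thesis
  proof (intro conjI exI[of _ "phiC rC"])
    show "\<forall>x\<in>(SC_Q :: (('a^2^2) \<Rightarrow> rat) set). \<forall>y\<in>SC_Q. gconv x y \<in> SC_Q" by (rule P1)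
    show "bij_betw (phiC rC) SC_Q UNIV" using inj surj by (simp add: bij_betw_def)
    show "\<forall>x\<in>SC_Q. \<forall>y\<in>SC_Q. phiC rC (\<lambda>M. x M + y M) = phiC rC x + phiC rC y" by (simp add: phi_add)
    show "\<forall>c. \<forall>x\<in>SC_Q. phiC rC (\<lambda>M. c * x M) = tscale c (phiC rC x)" by (simp add: phi_scale)
    show "\<forall>x\<in>SC_Q. \<forall>y\<in>SC_Q. phiC rC (gconv x y) = tmult (phiC rC x) (phiC rC y)"
      using good unfolding Good_def by blast
    show "phiC rC (\<lambda>M. SC_A M / (of_nat CARD('a) - 1)) = tone" by (rule unit)
  qed
qed

end
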